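(* There exists an absolute constant $C>0$ such that for all $A\ge1$, $N>0$, $R>0$, with $\phi$ defined by $\widehat\phi=R(\mathbf 1_{N+I_A}+\mathbf 1_{2N+I_A})$, one has $$\big|\operatorname{supp}\widehat{U_k[\phi](t)}\big|\le C^kA\quad\text{for all }k\ge1,\ t\ge0,$$ where $|\cdot|$ denotes Lebesgue measure. (The bound is independent of $N$.)
   Context: $I_A=[-\frac A2,\frac A2)$; $\widehat f(\xi)=\int e^{-ix\xi}f(x)dx$; $|D|$ is the Fourier multiplier with symbol $|\xi|$; $\mu\in\{-1,1\}$. $U_1[\phi](t)=e^{-it|D|}\phi$ and for $k\ge2$, $U_k[\phi](t)=-i\mu\sum_{k_1+k_2+k_3=k,\ k_i\ge1}\int_0^te^{-i(t-\tau)|D|}(U_{k_1}[\phi]\overline{U_{k_2}[\phi]}U_{k_3}[\phi])(\tau)d\tau$. *)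

theory Defs
  imports "HOL-Analysis.Analysis"
begin

text \<open>The Fourier transform convention is
  hat f (xi) = integral of exp(-i x xi) f(x) dx. Then
  hat(f * conj g * h)(xi) = (2 pi)^(-2) double integral of
  hat f(xi1) * conj(hat g(xi2)) * hat h(xi - xi1 + xi2) d xi1 d xi2,
  and the multiplier exp(-i t |D|) acts as multiplication by exp(-i t |xi|).\<close>

definition I_int :: "real \<Rightarrow> real set" where
  "I_int A = {-A/2..<A/2}"

definition phi_hat :: "real \<Rightarrow> real \<Rightarrow> real \<Rightarrow> real \<Rightarrow> complex" where
  "phi_hat A N R \<xi> = complex_of_real
     (R * (indicator ((\<lambda>x. N + x) ` I_int A) \<xi> + indicator ((\<lambda>x. 2*N + x) ` I_int A) \<xi>))"

text \<open>Uhat mu ph k t xi is the Fourier transform at xi of U_k[phi](t), where ph = hat phi.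
  The index set k1+k2+k3 = k, ki >= 1 is enumerated as k1 in [1,k), k2 in [1,k-k1),
  k3 = k - k1 - k2.\<close>
function Uhat :: "real \<Rightarrow> (real \<Rightarrow> complex) \<Rightarrow> nat \<Rightarrow> real \<Rightarrow> real \<Rightarrow> complex" where
  "Uhat \<mu> ph 0 t \<xi> = 0"
| "Uhat \<mu> ph (Suc 0) t \<xi> = exp (- \<i> * complex_of_real (t * \<bar>\<xi>\<bar>)) * ph \<xi>"
| "Uhat \<mu> ph (Suc (Suc n)) t \<xi> =
     - \<i> * complex_of_real \<mu> *
     (\<Sum>k1\<in>{1..<Suc (Suc n)}. \<Sum>k2\<in>{1..<Suc (Suc n) - k1}.
        (LINT \<tau>:{0..t}|lborel.
           exp (- \<i> * complex_of_real ((t - \<tau>) * \<bar>\<xi>\<bar>)) *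
           (complex_of_real (1 / (2*pi)^2) *
            (LINT \<xi>1|lborel. LINT \<xi>2|lborel.
               Uhat \<mu> ph k1 \<tau> \<xi>1 * cnj (Uhat \<mu> ph k2 \<tau> \<xi>2) *
               Uhat \<mu> ph (Suc (Suc n) - k1 - k2) \<tau> (\<xi> - \<xi>1 + \<xi>2)))))"
  by pat_completeness auto
termination
  by (relation "Wellfounded.measure (\<lambda>(\<mu>, ph, k, t, \<xi>). k)") auto

end

theory Submission
  imports Defs
begin

definition TT :: "real \<Rightarrow> real \<Rightarrow> nat \<Rightarrow> real set" where
  "TT A N k = (\<Union>j\<in>{-2*int k..2*int k}. {of_int j * N - real k * A / 2 .. of_int j * N + real k * A / 2})"

lemma TT_mem: "\<xi> \<in> TT A N k \<longleftrightarrow> (\<exists>j::int. \<bar>j\<bar> \<le> 2 * int k \<and> \<bar>\<xi> - of_int j * N\<bar> \<le> real k * A / 2)"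
proof -
  have e: "\<And>j::int. (\<bar>j\<bar> \<le> 2 * int k \<longleftrightarrow> j \<in> {-2*int k..2*int k}) \<and>
     (\<bar>\<xi> - of_int j * N\<bar> \<le> real k * A / 2 \<longleftrightarrow> \<xi> \<in> {of_int j * N - real k * A / 2 .. of_int j * N + real k * A / 2})"
    by (auto simp: abs_if)
  show ?thesis unfolding TT_def using e by blast
qed

lemma TT_add:
  assumes "\<xi>1 \<in> TT A N k1" "\<xi>2 \<in> TT A N k2" "\<xi>3 \<in> TT A N k3"
  shows "\<xi>1 - \<xi>2 + \<xi>3 \<in> TT A N (k1 + k2 + k3)"
proof -
  obtain j1 where j1: "\<bar>j1\<bar> \<le> 2 * int k1" "\<bar>\<xi>1 - of_int j1 * N\<bar> \<le> real k1 * A / 2"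
    using assms(1) TT_mem by blast
  obtain j2 where j2: "\<bar>j2\<bar> \<le> 2 * int k2" "\<bar>\<xi>2 - of_int j2 * N\<bar> \<le> real k2 * A / 2"
    using assms(2) TT_mem by blast
  obtain j3 where j3: "\<bar>j3\<bar> \<le> 2 * int k3" "\<bar>\<xi>3 - of_int j3 * N\<bar> \<le> real k3 * A / 2"
    using assms(3) TT_mem by blast
  have "\<bar>j1 - j2 + j3\<bar> \<le> 2 * int (k1 + k2 + k3)" using j1 j2 j3 by auto
  moreover have "\<bar>(\<xi>1 - \<xi>2 + \<xi>3) - of_int (j1 - j2 + j3) * N\<bar> \<le> real (k1 + k2 + k3) * A / 2"
  proof -
    have "(\<xi>1 - \<xi>2 + \<xi>3) - of_int (j1 - j2 + j3) * N = (\<xi>1 - of_int j1 * N) - (\<xi>2 - of_int j2 * N) + (\<xi>3 - of_int j3 * N)"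
      by (simp add: algebra_simps)
    moreover have "\<And>a b c::real. \<bar>a - b + c\<bar> \<le> \<bar>a\<bar> + \<bar>b\<bar> + \<bar>c\<bar>" by linarith
    ultimately have "\<bar>(\<xi>1 - \<xi>2 + \<xi>3) - of_int (j1 - j2 + j3) * N\<bar> \<le> real k1 * A / 2 + real k2 * A / 2 + real k3 * A / 2"
      using j1(2) j2(2) j3(2) by (smt (verit))
    then show ?thesis by (simp add: field_simps)
  qed
  ultimately show ?thesis unfolding TT_mem by blast
qed

lemma supp_Uhat:
  "\<forall>t \<xi>. \<xi> \<notin> TT A N k \<longrightarrow> Uhat \<mu> (phi_hat A N R) k t \<xi> = 0"
proof (induction k rule: less_induct)
  case (less k)
  show ?case
  proof (cases k)
    case 0
    then show ?thesis by simp
  next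
    case (Suc m)
    show ?thesis
    proof (cases m)
      case 0
      show ?thesis
      proof (intro allI impI)
        fix t \<xi> assume nt: "\<xi> \<notin> TT A N k"
        have "phi_hat A N R \<xi> = 0"
        proof (rule ccontr)
          assume "phi_hat A N R \<xi> \<noteq> 0"
          then have "\<xi> \<in> (\<lambda>x. N + x) ` I_int A \<or> \<xi> \<in> (\<lambda>x. 2*N + x) ` I_int A"
            unfolding phi_hat_def by (auto simp: indicator_def split: if_splits)
          then have "(\<exists>j::int. \<bar>j\<bar> \<le> 2 * int 1 \<and> \<bar>\<xi> - of_int j * N\<bar> \<le> real 1 * A / 2)"
          proof
            assume "\<xi> \<in> (\<lambda>x. N + x) ` I_int A"
            then have "\<bar>\<xi> - of_int 1 * N\<bar> \<le> real 1 * A / 2" by (auto simp: I_int_def abs_if)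
            then show ?thesis by (intro exI[of _ 1]) auto
          next
            assume "\<xi> \<in> (\<lambda>x. 2*N + x) ` I_int A"
            then have "\<bar>\<xi> - of_int 2 * N\<bar> \<le> real 1 * A / 2" by (auto simp: I_int_def abs_if)
            then show ?thesis by (intro exI[of _ 2]) auto
          qed
          then show False using nt Suc 0 TT_mem by auto
        qed
        then show "Uhat \<mu> (phi_hat A N R) k t \<xi> = 0" using Suc 0 by simp
      qed
    next
      case (Suc n)
      have kk: "k = Suc (Suc n)" using \<open>k = Suc m\<close> Suc by simp
      show ?thesis
      proof (intro allI impI)
        fix t \<xi> assume nt: "\<xi> \<notin> TT A N k"
        have z: "Uhat \<mu> (phi_hat A N R) k1 \<tau> \<xi>1 * cnj (Uhat \<mu> (phi_hat A N R) k2 \<tau> \<xi>2) *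
               Uhat \<mu> (phi_hat A N R) (k - k1 - k2) \<tau> (\<xi> - \<xi>1 + \<xi>2) = 0"
          if k1: "k1 \<in> {1..<k}" and k2: "k2 \<in> {1..<k - k1}" for k1 k2 \<tau> \<xi>1 \<xi>2
        proof -
          have lt: "k1 < k" "k2 < k" "k - k1 - k2 < k" using k1 k2 by auto
          have sk: "k1 + k2 + (k - k1 - k2) = k" using k1 k2 by auto
          show ?thesis
          proof (cases "\<xi>1 \<in> TT A N k1 \<and> \<xi>2 \<in> TT A N k2 \<and> \<xi> - \<xi>1 + \<xi>2 \<in> TT A N (k - k1 - k2)")
            case True
            then have "\<xi>1 - \<xi>2 + (\<xi> - \<xi>1 + \<xi>2) \<in> TT A N k"
              using TT_add[of \<xi>1 A N k1 \<xi>2 k2 "\<xi> - \<xi>1 + \<xi>2" "k - k1 - k2"] sk by simp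
            then show ?thesis using nt by simp
          next
            case False
            then show ?thesis using less lt by auto
          qed
        qed
        have s0: "(LINT \<tau>:{0..t}|lborel.
           exp (- \<i> * complex_of_real ((t - \<tau>) * \<bar>\<xi>\<bar>)) *
           (complex_of_real (1 / (2*pi)^2) *
            (LINT \<xi>1|lborel. LINT \<xi>2|lborel.
               Uhat \<mu> (phi_hat A N R) k1 \<tau> \<xi>1 * cnj (Uhat \<mu> (phi_hat A N R) k2 \<tau> \<xi>2) *
               Uhat \<mu> (phi_hat A N R) (k - k1 - k2) \<tau> (\<xi> - \<xi>1 + \<xi>2)))) = 0"
          if k1: "k1 \<in> {1..<k}" and k2: "k2 \<in> {1..<k - k1}" for k1 k2
          by (simp only: z[OF k1 k2]) simp
        have "Uhat \<mu> (phi_hat A N R) k t \<xi> = - \<i> * complex_of_real \<mu> *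
     (\<Sum>k1\<in>{1..<k}. \<Sum>k2\<in>{1..<k - k1}.
        (LINT \<tau>:{0..t}|lborel.
           exp (- \<i> * complex_of_real ((t - \<tau>) * \<bar>\<xi>\<bar>)) *
           (complex_of_real (1 / (2*pi)^2) *
            (LINT \<xi>1|lborel. LINT \<xi>2|lborel.
               Uhat \<mu> (phi_hat A N R) k1 \<tau> \<xi>1 * cnj (Uhat \<mu> (phi_hat A N R) k2 \<tau> \<xi>2) *
               Uhat \<mu> (phi_hat A N R) (k - k1 - k2) \<tau> (\<xi> - \<xi>1 + \<xi>2)))))"
          unfolding kk by (rule Uhat.simps(3))
        also have "\<dots> = 0"
          using s0 by (simp del: Uhat.simps)
        finally show "Uhat \<mu> (phi_hat A N R) k t \<xi> = 0" .
      qed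
    qed
  qed
qed

lemma pow_bound: "k \<ge> 1 \<Longrightarrow> real ((4*k+1)*k) \<le> 5 ^ k"
proof (induction k rule: dec_induct)
  case base
  then show ?case by simp
next
  case (step k)
  have kk: "16 * k \<le> 16 * (k * k)" using step(1) by simp
  have "(4*Suc k+1)*Suc k \<le> 5 * ((4*k+1)*k)"
  proof -
    have e1: "(4*Suc k+1)*Suc k = 4*(k*k) + 9*k + 5" by (simp add: algebra_simps)
    have e2: "5*((4*k+1)*k) = 20*(k*k) + 5*k" by (simp add: algebra_simps)
    show ?thesis unfolding e1 e2 using kk step(1) by linarith
  qed
  then have "real ((4*Suc k+1)*Suc k) \<le> 5 * real ((4*k+1)*k)"
    by (metis of_nat_le_iff of_nat_mult of_nat_numeral)
  also have "\<dots> \<le> 5 * 5 ^ k" using step(3) by simp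
  finally show ?case by simp
qed

theorem lemma5p6:
  shows "\<exists>C::real. C > 0 \<and>
    (\<forall>\<mu>::real. \<forall>A::real. \<forall>N::real. \<forall>R::real. \<forall>k::nat. \<forall>t::real.
       \<mu> \<in> {-1, 1} \<longrightarrow> A \<ge> 1 \<longrightarrow> N > 0 \<longrightarrow> R > 0 \<longrightarrow> k \<ge> 1 \<longrightarrow> t \<ge> 0 \<longrightarrow>
       emeasure lborel (closure {\<xi>. Uhat \<mu> (phi_hat A N R) k t \<xi> \<noteq> 0})
         \<le> ennreal (C ^ k * A))"
proof (intro exI[of _ 5] conjI allI impI)
  fix \<mu> A N R :: real and k :: nat and t :: real
  assume A: "A \<ge> 1" and k: "k \<ge> 1"
  have cl: "closed (TT A N k)" unfolding TT_def by (intro closed_UN) auto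
  have "{\<xi>. Uhat \<mu> (phi_hat A N R) k t \<xi> \<noteq> 0} \<subseteq> TT A N k"
    using supp_Uhat[of A N k \<mu> R] by auto
  then have sub: "closure {\<xi>. Uhat \<mu> (phi_hat A N R) k t \<xi> \<noteq> 0} \<subseteq> TT A N k"
    using cl closure_minimal by blast
  have "emeasure lborel (closure {\<xi>. Uhat \<mu> (phi_hat A N R) k t \<xi> \<noteq> 0}) \<le> emeasure lborel (TT A N k)"
    using sub cl by (intro emeasure_mono) auto
  also have "\<dots> \<le> (\<Sum>j\<in>{-2*int k..2*int k}. emeasure lborel {of_int j * N - real k * A / 2 .. of_int j * N + real k * A / 2})"
    unfolding TT_def by (intro emeasure_subadditive_finite) auto
  also have "\<dots> = (\<Sum>j\<in>{-2*int k..2*int k}. ennreal (real k * A))"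
    using A by (intro sum.cong) (auto simp: algebra_simps)
  also have "\<dots> = ennreal (real ((4*k+1)*k) * A)"
  proof -
    have c: "card {-2*int k..2*int k} = 4*k+1" by simp
    have "(\<Sum>j\<in>{-2*int k..2*int k}. ennreal (real k * A)) = of_nat (4*k+1) * ennreal (real k * A)"
      using c by simp
    also have "\<dots> = ennreal (real (4*k+1)) * ennreal (real k * A)"
      by (simp add: ennreal_of_nat_eq_real_of_nat)
    also have "\<dots> = ennreal (real (4*k+1) * (real k * A))"
      using A by (simp add: ennreal_mult)
    finally show ?thesis by (simp add: algebra_simps)
  qed
  also have "\<dots> \<le> ennreal (5 ^ k * A)"
    using pow_bound[OF k] A by (intro ennreal_leI mult_right_mono) auto
  finally show "emeasure lborel (closure {\<xi>. Uhat \<mu> (phi_hat A N R) k t \<xi> \<noteq> 0}) \<le> ennreal (5 ^ k * A)" .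
qed simp

end
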